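(* Let $w,x,y,z$ be nodes of a median graph and $B=\big((I_{yw}\cap I_{xw})\cup(I_{yw}\cap I_{zw})\big)\setminus\{w\}$. Then $B=\emptyset$ if and only if $w\in I_{y\,m(x,y,z)}$.
   Context: $G$ is a finite connected unweighted undirected median graph: with shortest-path distance $d$ and $I_{ab}=\{v:d(a,v)+d(v,b)=d(a,b)\}$, $\lvert I_{ab}\cap I_{ac}\cap I_{bc}\rvert=1$ for all nodes $a,b,c$, and $m(a,b,c)$ denotes that unique node. (In the paper, $B$ is the set of bargaining points of participant $y$ when the current winner is $w$ and the other group members are $x,z$.) *)

theory Defs
  imports Main
begin

inductive walk_len :: "('a \<Rightarrow> 'a \<Rightarrow> bool) \<Rightarrow> nat \<Rightarrow> 'a \<Rightarrow> 'a \<Rightarrow> bool"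
  for E where
  walk_nil: "walk_len E 0 u u"
| walk_cons: "E u v \<Longrightarrow> walk_len E n v w \<Longrightarrow> walk_len E (Suc n) u w"

definition simple_graph :: "'a set \<Rightarrow> ('a \<Rightarrow> 'a \<Rightarrow> bool) \<Rightarrow> bool" where
  "simple_graph V E \<longleftrightarrow>
     (\<forall>u v. E u v \<longrightarrow> u \<in> V \<and> v \<in> V) \<and>
     (\<forall>u v. E u v \<longrightarrow> E v u) \<and> (\<forall>u. \<not> E u u)"

definition connected_graph :: "'a set \<Rightarrow> ('a \<Rightarrow> 'a \<Rightarrow> bool) \<Rightarrow> bool" where
  "connected_graph V E \<longleftrightarrow> V \<noteq> {} \<and> (\<forall>u\<in>V. \<forall>v\<in>V. \<exists>n. walk_len E n u v)"

definition gdist :: "('a \<Rightarrow> 'a \<Rightarrow> bool) \<Rightarrow> 'a \<Rightarrow> 'a \<Rightarrow> nat" where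
  "gdist E u v = (LEAST n. walk_len E n u v)"

definition interval :: "'a set \<Rightarrow> ('a \<Rightarrow> 'a \<Rightarrow> bool) \<Rightarrow> 'a \<Rightarrow> 'a \<Rightarrow> 'a set" where
  "interval V E a b = {v \<in> V. gdist E a v + gdist E v b = gdist E a b}"

definition median_graph :: "'a set \<Rightarrow> ('a \<Rightarrow> 'a \<Rightarrow> bool) \<Rightarrow> bool" where
  "median_graph V E \<longleftrightarrow> finite V \<and> simple_graph V E \<and> connected_graph V E \<and>
     (\<forall>a\<in>V. \<forall>b\<in>V. \<forall>c\<in>V.
        card (interval V E a b \<inter> interval V E a c \<inter> interval V E b c) = 1)"

definition median :: "'a set \<Rightarrow> ('a \<Rightarrow> 'a \<Rightarrow> bool) \<Rightarrow> 'a \<Rightarrow> 'a \<Rightarrow> 'a \<Rightarrow> 'a" where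
  "median V E a b c =
     (THE m. m \<in> interval V E a b \<inter> interval V E a c \<inter> interval V E b c)"

end

theory Submission
  imports Defs
begin

lemma walk_snoc: "walk_len E n u v \<Longrightarrow> E v w \<Longrightarrow> walk_len E (Suc n) u w"
  by (induction rule: walk_len.induct) (auto intro: walk_len.intros)

lemma walk_app: "walk_len E n u v \<Longrightarrow> walk_len E k v w \<Longrightarrow> walk_len E (n+k) u w"
  by (induction rule: walk_len.induct) (auto intro: walk_len.intros)

lemma walk_rev:
  assumes s: "\<And>a b. E a b \<Longrightarrow> E b a" and h: "walk_len E n u v"
  shows "walk_len E n v u"
  using h by (induction rule: walk_len.induct) (auto intro: walk_len.intros walk_snoc s)

lemma mg_sym: "median_graph V E \<Longrightarrow> gdist E u v = gdist E v u"
proof -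
  assume "median_graph V E"
  then have s: "\<And>a b. E a b \<Longrightarrow> E b a" by (auto simp: median_graph_def simple_graph_def)
  have "\<And>n. walk_len E n u v = walk_len E n v u" using walk_rev[of E, OF s] by blast
  then show ?thesis by (simp add: gdist_def)
qed

lemma mg_conn: "median_graph V E \<Longrightarrow> u \<in> V \<Longrightarrow> v \<in> V \<Longrightarrow> walk_len E (gdist E u v) u v"
  unfolding gdist_def median_graph_def connected_graph_def by (metis LeastI)

lemma mg_tri: "median_graph V E \<Longrightarrow> u \<in> V \<Longrightarrow> v \<in> V \<Longrightarrow> w \<in> V \<Longrightarrow>
   gdist E u w \<le> gdist E u v + gdist E v w"
proof -
  assume a: "median_graph V E" "u \<in> V" "v \<in> V" "w \<in> V"
  have "walk_len E (gdist E u v + gdist E v w) u w"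
    using walk_app mg_conn a by metis
  then show ?thesis unfolding gdist_def by (rule Least_le)
qed

lemma mg_zero: "gdist E u u = 0"
  unfolding gdist_def by (metis (mono_tags) Least_eq_0 walk_nil)

lemma mg_zero_eq: "median_graph V E \<Longrightarrow> u \<in> V \<Longrightarrow> v \<in> V \<Longrightarrow> gdist E u v = 0 \<Longrightarrow> u = v"
  using mg_conn[of V E u v] by (auto elim: walk_len.cases)

lemma mg_med: "median_graph V E \<Longrightarrow> a \<in> V \<Longrightarrow> b \<in> V \<Longrightarrow> c \<in> V \<Longrightarrow>
   median V E a b c \<in> interval V E a b \<inter> interval V E a c \<inter> interval V E b c \<and>
   (\<forall>u. u \<in> interval V E a b \<inter> interval V E a c \<inter> interval V E b c \<longrightarrow> u = median V E a b c)"
proof -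
  assume a: "median_graph V E" "a \<in> V" "b \<in> V" "c \<in> V"
  then have "card (interval V E a b \<inter> interval V E a c \<inter> interval V E b c) = 1"
    unfolding median_graph_def by blast
  then obtain m where m: "interval V E a b \<inter> interval V E a c \<inter> interval V E b c = {m}"
    by (rule card_1_singletonE)
  then have "median V E a b c = m" unfolding median_def by auto
  then show ?thesis using m by auto
qed

lemma mem_int: "v \<in> interval V E a b \<longleftrightarrow> v \<in> V \<and> gdist E a v + gdist E v b = gdist E a b"
  by (simp add: interval_def)

lemma stepA:
  assumes g: "median_graph V E" and V: "y \<in> V" "a \<in> V" "w \<in> V"
  shows "(interval V E y w \<inter> interval V E a w \<subseteq> {w}) \<longleftrightarrow> gdist E y w + gdist E w a = gdist E y a"
proof
  assume h: "interval V E y w \<inter> interval V E a w \<subseteq> {w}"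
  have "median V E y a w \<in> interval V E y a \<inter> interval V E y w \<inter> interval V E a w"
    using mg_med[OF g V] by blast
  with h have "median V E y a w = w" "w \<in> interval V E y a" by auto
  then show "gdist E y w + gdist E w a = gdist E y a" by (simp add: mem_int)
next
  assume h: "gdist E y w + gdist E w a = gdist E y a"
  show "interval V E y w \<inter> interval V E a w \<subseteq> {w}"
  proof
    fix v assume v: "v \<in> interval V E y w \<inter> interval V E a w"
    then have vV: "v \<in> V" and e1: "gdist E y v + gdist E v w = gdist E y w"
      and e2: "gdist E a v + gdist E v w = gdist E a w" by (auto simp: mem_int)
    have t: "gdist E y a \<le> gdist E y v + gdist E v a" using mg_tri[OF g V(1) vV V(2)] .
    have "gdist E v a = gdist E a v" "gdist E w a = gdist E a w" using mg_sym[OF g] by auto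
    then have "gdist E v w = 0" using t e1 e2 h by linarith
    then show "v \<in> {w}" using mg_zero_eq[OF g vV V(3)] by simp
  qed
qed

theorem lemmaI7:
  fixes V :: "'a set" and E :: "'a \<Rightarrow> 'a \<Rightarrow> bool" and w x y z :: 'a
  assumes "median_graph V E"
    and "w \<in> V" "x \<in> V" "y \<in> V" "z \<in> V"
  shows "((interval V E y w \<inter> interval V E x w) \<union> (interval V E y w \<inter> interval V E z w)) - {w} = {}
         \<longleftrightarrow> w \<in> interval V E y (median V E x y z)"
proof -
  note g = assms(1) and V = assms(2-5)
  let ?d = "gdist E"
  have symm: "\<And>u v. ?d u v = ?d v u" using mg_sym[OF g] by blast
  have A: "((interval V E y w \<inter> interval V E x w) \<union> (interval V E y w \<inter> interval V E z w)) - {w} = {}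
     \<longleftrightarrow> (?d y w + ?d w x = ?d y x \<and> ?d y w + ?d w z = ?d y z)"
    using stepA[OF g V(3) V(2) V(1)] stepA[OF g V(3) V(4) V(1)] by blast
  define m where "m = median V E x y z"
  have mm: "m \<in> interval V E x y \<inter> interval V E x z \<inter> interval V E y z"
    and mu: "\<And>u. u \<in> interval V E x y \<inter> interval V E x z \<inter> interval V E y z \<Longrightarrow> u = m"
    using mg_med[OF g V(2) V(3) V(4)] unfolding m_def by blast+
  have mV: "m \<in> V" and m1: "?d x m + ?d m y = ?d x y" and m2: "?d x m + ?d m z = ?d x z"
    and m3: "?d y m + ?d m z = ?d y z" using mm by (auto simp: mem_int)
  have B: "(?d y w + ?d w x = ?d y x \<and> ?d y w + ?d w z = ?d y z) \<longleftrightarrow> ?d y w + ?d w m = ?d y m"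
  proof
    assume h: "?d y w + ?d w x = ?d y x \<and> ?d y w + ?d w z = ?d y z"
    define u where "u = median V E w x z"
    have uu: "u \<in> interval V E w x \<inter> interval V E w z \<inter> interval V E x z"
      using mg_med[OF g V(1) V(2) V(4)] unfolding u_def by blast
    have uV: "u \<in> V" and u1: "?d w u + ?d u x = ?d w x" and u2: "?d w u + ?d u z = ?d w z"
      and u3: "?d x u + ?d u z = ?d x z" using uu by (auto simp: mem_int)
    have t1: "?d y x \<le> ?d y u + ?d u x" using mg_tri[OF g V(3) uV V(2)] .
    have t2: "?d y u \<le> ?d y w + ?d w u" using mg_tri[OF g V(3) V(1) uV] .
    have t3: "?d y z \<le> ?d y u + ?d u z" using mg_tri[OF g V(3) uV V(4)] .
    have yu: "?d y u = ?d y w + ?d w u" using h u1 t1 t2 by linarith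
    have "?d x u + ?d u y = ?d x y" using yu h u1 t1 t2 symm[of x u] symm[of u y] symm[of x y] by linarith
    moreover have "?d y u + ?d u z = ?d y z" using yu h u2 t3 by linarith
    ultimately have "u = m" using mu uV u3 by (auto simp: mem_int)
    then show "?d y w + ?d w m = ?d y m" using yu by simp
  next
    assume h: "?d y w + ?d w m = ?d y m"
    have t1: "?d y x \<le> ?d y w + ?d w x" using mg_tri[OF g V(3) V(1) V(2)] .
    have t2: "?d w x \<le> ?d w m + ?d m x" using mg_tri[OF g V(1) mV V(2)] .
    have t3: "?d y z \<le> ?d y w + ?d w z" using mg_tri[OF g V(3) V(1) V(4)] .
    have t4: "?d w z \<le> ?d w m + ?d m z" using mg_tri[OF g V(1) mV V(4)] .
    have t5: "?d y w + ?d w x \<ge> ?d y x" using t1 .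
    have s: "?d m x = ?d x m" "?d m y = ?d y m" "?d x y = ?d y x" using symm by auto
    show "?d y w + ?d w x = ?d y x \<and> ?d y w + ?d w z = ?d y z"
    proof
      have "?d y x \<le> ?d y w + ?d w x" by (rule t1)
      moreover have "?d y w + ?d w x \<le> ?d y x" using h t2 m1 s by linarith
      ultimately show "?d y w + ?d w x = ?d y x" by linarith
    next
      show "?d y w + ?d w z = ?d y z" using h t3 t4 m3 by linarith
    qed
  qed
  show ?thesis using A B V(1) by (simp add: mem_int m_def)
qed

end
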